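(* Let $\Omega$ be a finite nonempty set, $\mathcal{A}=2^\Omega$, and let $\mu$ be a $q$-measure on $\mathcal{A}$. If $\phi$ and $\psi$ are quadratic coevents on $\mathcal{A}$ that are both 2-generated by $\mu$, then $\phi=\psi$.
   Context: Let $\Omega$ be a finite nonempty set and $\mathcal{A}=2^\Omega$. A coevent is a map $\phi:\mathcal{A}\to\{0,1\}$ with $\phi(\emptyset)=0$. A coevent $\phi$ is quadratic if for all pairwise disjoint $A,B,C\in\mathcal{A}$: $\phi(A\cup B\cup C)=\phi(A\cup B)\oplus\phi(A\cup C)\oplus\phi(B\cup C)\oplus\phi(A)\oplus\phi(B)\oplus\phi(C)$, where $\oplus$ is addition mod 2. For $f:\Omega\to[0,\infty)$ and a coevent $\phi$, the $q$-integral is $\int f\,d\phi=\int_0^\infty \phi(\{\omega\in\Omega: f(\omega)>\lambda\})\,d\lambda$ (Lebesgue measure in $\lambda$), and for $A\in\mathcal{A}$, $\int_A f\,d\phi=\int f\chi_A\,d\phi$. A $q$-measure is a map $\mu:\mathcal{A}\to[0,\infty)$ such that for all pairwise disjoint $A,B,C\in\mathcal{A}$: $\mu(A\cup B\cup C)=\mu(A\cup B)+\mu(A\cup C)+\mu(B\cup C)-\mu(A)-\mu(B)-\mu(C)$. The $q$-measure $\mu$ 2-generates $\phi$ if there is a symmetric function $f:\Omega\times\Omega\to(0,\infty)$ (i.e. $f(\omega,\omega')=f(\omega',\omega)$) such that for all $A\in\mathcal{A}$, $\mu(A)=\int_A g_A\,d\phi$, where $g_A:\Omega\to[0,\infty)$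 is defined by $g_A(\omega')=\int_A f(\cdot,\omega')\,d\phi$ (the $q$-integral over $A$ of $\omega\mapsto f(\omega,\omega')$). *)

theory Defs
  imports "HOL-Analysis.Analysis"
begin

text \<open>Setting: a finite nonempty sample space Omega (a subset of the type 'a);
  the event algebra is Pow Omega.  A coevent is a map from events to {0,1},
  represented as a boolean-valued function (True = 1, False = 0); addition mod 2
  is exclusive or.  Only values on Pow Omega matter.\<close>

definition coevent :: "'a set \<Rightarrow> ('a set \<Rightarrow> bool) \<Rightarrow> bool" where
  "coevent Omega phi \<longleftrightarrow> \<not> phi {}"

definition quadratic_coevent :: "'a set \<Rightarrow> ('a set \<Rightarrow> bool) \<Rightarrow> bool" where
  "quadratic_coevent Omega phi \<longleftrightarrow> coevent Omega phi \<and>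
     (\<forall>A B C. A \<subseteq> Omega \<longrightarrow> B \<subseteq> Omega \<longrightarrow> C \<subseteq> Omega \<longrightarrow>
        A \<inter> B = {} \<longrightarrow> A \<inter> C = {} \<longrightarrow> B \<inter> C = {} \<longrightarrow>
        phi (A \<union> B \<union> C) =
          (phi (A \<union> B) \<noteq> (phi (A \<union> C) \<noteq> (phi (B \<union> C) \<noteq>
            (phi A \<noteq> (phi B \<noteq> phi C))))))"

definition q_integral :: "'a set \<Rightarrow> ('a set \<Rightarrow> bool) \<Rightarrow> ('a \<Rightarrow> real) \<Rightarrow> real" where
  "q_integral Omega phi f =
     (LINT t:{0..}|lborel. (if phi {w \<in> Omega. f w > t} then 1 else 0))"

definition q_integral_on :: "'a set \<Rightarrow> ('a set \<Rightarrow> bool) \<Rightarrow> 'a set \<Rightarrow> ('a \<Rightarrow> real) \<Rightarrow> real" where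
  "q_integral_on Omega phi A f = q_integral Omega phi (\<lambda>w. f w * indicator A w)"

definition q_measure :: "'a set \<Rightarrow> ('a set \<Rightarrow> real) \<Rightarrow> bool" where
  "q_measure Omega mu \<longleftrightarrow>
     (\<forall>A. A \<subseteq> Omega \<longrightarrow> mu A \<ge> 0) \<and>
     (\<forall>A B C. A \<subseteq> Omega \<longrightarrow> B \<subseteq> Omega \<longrightarrow> C \<subseteq> Omega \<longrightarrow>
        A \<inter> B = {} \<longrightarrow> A \<inter> C = {} \<longrightarrow> B \<inter> C = {} \<longrightarrow>
        mu (A \<union> B \<union> C) = mu (A \<union> B) + mu (A \<union> C) + mu (B \<union> C) - mu A - mu B - mu C)"

definition two_generates :: "'a set \<Rightarrow> ('a set \<Rightarrow> real) \<Rightarrow> ('a set \<Rightarrow> bool) \<Rightarrow> bool" where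
  "two_generates Omega mu phi \<longleftrightarrow>
     (\<exists>f :: 'a \<Rightarrow> 'a \<Rightarrow> real.
        (\<forall>w\<in>Omega. \<forall>w'\<in>Omega. f w w' > 0 \<and> f w w' = f w' w) \<and>
        (\<forall>A. A \<subseteq> Omega \<longrightarrow>
           mu A = q_integral_on Omega phi A
                    (\<lambda>w'. q_integral_on Omega phi A (\<lambda>w. f w w'))))"

end

theory Submission
  imports Defs
begin

lemma content_Ico: "Henstock_Kurzweil_Integration.content {x..<y::real} = max (y-x) 0"
  apply (cases "x \<le> y")
   apply (simp add: measure_def)
  apply simp
  done

lemma int_Ico: "integral\<^sup>L lborel (indicator {x..<y} :: real\<Rightarrow>real) = max (y-x) 0"
proof (cases "x \<le> y")
  case True thus ?thesis by (simp add: measure_def)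
next
  case False thus ?thesis by simp
qed

lemma intg_Ico: "integrable lborel (indicator {x..<y} :: real\<Rightarrow>real)"
  by (cases "x \<le> y") (auto simp: integrable_indicator_iff)

lemma qint_step:
  assumes "\<And>t. t \<ge> 0 \<Longrightarrow> (if phi {w \<in> Omega. h w > t} then 1 else 0 :: real) =
       c1 * indicator {0..<u1} t + c2 * indicator {l2..<u2} t + c3 * indicator {l3..<u3} t"
    and "0 \<le> l2" "0 \<le> l3"
  shows "q_integral Omega phi h = c1 * max u1 0 + c2 * max (u2-l2) 0 + c3 * max (u3-l3) 0"
proof -
  have eq: "(\<lambda>t. indicator {0..} t *\<^sub>R (if phi {w \<in> Omega. h w > t} then 1 else 0 :: real)) =
     (\<lambda>t. c1 * indicator {0..<u1} t + c2 * indicator {l2..<u2} t + c3 * indicator {l3..<u3} t)"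
  proof
    fix t :: real
    show "indicator {0..} t *\<^sub>R (if phi {w \<in> Omega. h w > t} then 1 else 0 :: real) =
     c1 * indicator {0..<u1} t + c2 * indicator {l2..<u2} t + c3 * indicator {l3..<u3} t"
    proof (cases "t \<ge> 0")
      case True thus ?thesis using assms(1)[OF True] by simp
    next
      case False thus ?thesis using assms(2,3) by (simp add: indicator_def)
    qed
  qed
  have "q_integral Omega phi h = integral\<^sup>L lborel
     (\<lambda>t. c1 * indicator {0..<u1} t + c2 * indicator {l2..<u2} t + c3 * indicator {l3..<u3} t)"
    unfolding q_integral_def set_lebesgue_integral_def eq ..
  also have "\<dots> = c1 * max u1 0 + c2 * max (u2-l2) 0 + c3 * max (u3-l3) 0"
    by (simp add: intg_Ico content_Ico)
  finally show ?thesis .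
qed

lemma qint_single:
  assumes "a \<in> Omega" "\<not> phi {}"
  shows "q_integral_on Omega phi {a} h = (if phi {a} then max (h a) 0 else 0)"
proof -
  have "q_integral_on Omega phi {a} h =
    (if phi {a} then 1 else 0) * max (h a) 0 + 0 * max (0-0) 0 + 0 * max (0-0) 0"
    unfolding q_integral_on_def
  proof (rule qint_step)
    fix t :: real assume t: "t \<ge> 0"
    have "{w \<in> Omega. h w * indicator {a} w > t} = (if h a > t then {a} else {})"
      using assms t by (auto simp: indicator_def split: if_splits)
    thus "(if phi {w \<in> Omega. h w * indicator {a} w > t} then 1 else 0 :: real) =
       (if phi {a} then 1 else 0) * indicator {0..<h a} t + 0 * indicator {0..<0} t + 0 * indicator {0..<0} t"
      using assms t by (auto simp: indicator_def)
  qed auto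
  thus ?thesis by simp
qed

lemma qint_pair:
  assumes "a \<in> Omega" "b \<in> Omega" "a \<noteq> b" "\<not> phi {}" "h a \<ge> 0" "h b \<ge> 0"
  shows "q_integral_on Omega phi {a,b} h =
     (if phi {a,b} then min (h a) (h b) else 0) + (if phi {a} then max (h a - h b) 0 else 0)
     + (if phi {b} then max (h b - h a) 0 else 0)"
proof -
  have "q_integral_on Omega phi {a,b} h =
    (if phi {a,b} then 1 else 0) * max (min (h a) (h b)) 0 + (if phi {a} then 1 else 0) * max (h a - h b) 0
    + (if phi {b} then 1 else 0) * max (h b - h a) 0"
    unfolding q_integral_on_def
  proof (rule qint_step)
    fix t :: real assume t: "t \<ge> 0"
    have "{w \<in> Omega. h w * indicator {a,b} w > t} =
       (if h a > t then {a} else {}) \<union> (if h b > t then {b} else {})"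
      using assms t by (auto simp: indicator_def split: if_splits)
    thus "(if phi {w \<in> Omega. h w * indicator {a,b} w > t} then 1 else 0 :: real) =
       (if phi {a,b} then 1 else 0) * indicator {0..<min (h a) (h b)} t + (if phi {a} then 1 else 0) * indicator {h b..<h a} t
       + (if phi {b} then 1 else 0) * indicator {h a..<h b} t"
      using assms t by (auto simp: indicator_def insert_commute)
  qed (use assms in auto)
  thus ?thesis using assms by simp
qed

lemma arith_char:
  fixes x y z ga gb m ma mb :: real and pa pb pab :: bool
  assumes "x > 0" "y > 0" "z > 0"
  assumes "ga = (if pab then min x z else 0) + (if pa then max (x-z) 0 else 0) + (if pb then max (z-x) 0 else 0)"
  assumes "gb = (if pab then min z y else 0) + (if pa then max (z-y) 0 else 0) + (if pb then max (y-z) 0 else 0)"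
  assumes "m = (if pab then min ga gb else 0) + (if pa then max (ga-gb) 0 else 0) + (if pb then max (gb-ga) 0 else 0)"
  assumes "ma = (if pa then x else 0)" "mb = (if pb then y else 0)"
  shows "pab \<longleftrightarrow> (if pa \<and> pb then m \<ge> max ma mb else if pa then m \<ge> ma else if pb then m \<ge> mb else m > 0)"
  using assms
  by (cases pa; cases pb; cases pab) (auto simp: max_def min_def)

lemma gen_single:
  assumes "\<not> phi {}" "\<forall>w\<in>Omega. \<forall>w'\<in>Omega. f w w' > 0 \<and> f w w' = f w' w"
    and mu: "\<forall>A. A \<subseteq> Omega \<longrightarrow> mu A = q_integral_on Omega phi A
                    (\<lambda>w'. q_integral_on Omega phi A (\<lambda>w. f w w'))"
    and a: "a \<in> Omega"
  shows "mu {a} = (if phi {a} then f a a else 0)"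
proof -
  have "mu {a} = q_integral_on Omega phi {a} (\<lambda>w'. q_integral_on Omega phi {a} (\<lambda>w. f w w'))"
    using mu a by blast
  also have "\<dots> = (if phi {a} then max (q_integral_on Omega phi {a} (\<lambda>w. f w a)) 0 else 0)"
    by (rule qint_single[of a Omega phi, OF a assms(1)])
  also have "\<dots> = (if phi {a} then f a a else 0)"
  proof -
    have "f a a > 0" using assms(2) a by blast
    thus ?thesis using qint_single[of a Omega phi "\<lambda>w. f w a", OF a assms(1)]
      by (auto simp: max_def)
  qed
  finally show ?thesis .
qed

lemma gen_pair:
  assumes "\<not> phi {}" "\<forall>w\<in>Omega. \<forall>w'\<in>Omega. f w w' > 0 \<and> f w w' = f w' w"
    and mu: "\<forall>A. A \<subseteq> Omega \<longrightarrow> mu A = q_integral_on Omega phi A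
                    (\<lambda>w'. q_integral_on Omega phi A (\<lambda>w. f w w'))"
    and a: "a \<in> Omega" and b: "b \<in> Omega" and ab: "a \<noteq> b"
  shows "phi {a,b} \<longleftrightarrow> (if phi {a} \<and> phi {b} then mu {a,b} \<ge> max (mu {a}) (mu {b})
     else if phi {a} then mu {a,b} \<ge> mu {a} else if phi {b} then mu {a,b} \<ge> mu {b} else mu {a,b} > 0)"
proof -
  define g where "g = (\<lambda>w'. q_integral_on Omega phi {a,b} (\<lambda>w. f w w'))"
  have fpos: "\<And>w w'. w \<in> Omega \<Longrightarrow> w' \<in> Omega \<Longrightarrow> f w w' > 0" using assms(2) by blast
  have fsym: "f b a = f a b" using assms(2) a b by metis
  have g: "\<And>w'. w' \<in> Omega \<Longrightarrow> g w' = (if phi {a,b} then min (f a w') (f b w') else 0) + (if phi {a} then max (f a w' - f b w') 0 else 0)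
     + (if phi {b} then max (f b w' - f a w') 0 else 0)"
    unfolding g_def by (rule qint_pair[of a Omega b phi, OF a b ab assms(1)]) (use fpos a b in \<open>auto intro: less_imp_le\<close>)
  have ga: "g a \<ge> 0" "g b \<ge> 0" using g[OF a] g[OF b] fpos[OF a a] fpos[OF b a] fpos[OF a b] fpos[OF b b] by (auto simp: min_def max_def)
  have "mu {a,b} = q_integral_on Omega phi {a,b} g" using mu a b unfolding g_def by simp
  also have "\<dots> = (if phi {a,b} then min (g a) (g b) else 0) + (if phi {a} then max (g a - g b) 0 else 0)
     + (if phi {b} then max (g b - g a) 0 else 0)"
    by (rule qint_pair[of a Omega b phi g, OF a b ab assms(1) ga])
  finally have mab: "mu {a,b} = \<dots>" .
  have ma: "mu {a} = (if phi {a} then f a a else 0)" by (rule gen_single[OF assms(1,2) mu a])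
  have mb: "mu {b} = (if phi {b} then f b b else 0)" by (rule gen_single[OF assms(1,2) mu b])
  show ?thesis
  proof (rule arith_char[OF fpos[OF a a] fpos[OF b b] fpos[OF a b] _ _ mab ma mb])
    show "g a = (if phi {a,b} then min (f a a) (f a b) else 0) + (if phi {a} then max (f a a - f a b) 0 else 0)
     + (if phi {b} then max (f a b - f a a) 0 else 0)"
      using g[OF a] fsym by (simp only:)
    show "g b = (if phi {a,b} then min (f a b) (f b b) else 0) + (if phi {a} then max (f a b - f b b) 0 else 0)
     + (if phi {b} then max (f b b - f a b) 0 else 0)"
      using g[OF b] by (simp only:)
  qed
qed

lemma quad_reduce:
  assumes fin: "finite Omega" and qp: "quadratic_coevent Omega phi" and qq: "quadratic_coevent Omega psi"
    and small: "\<And>A. A \<subseteq> Omega \<Longrightarrow> card A \<le> 2 \<Longrightarrow> phi A = psi A"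
  shows "A \<subseteq> Omega \<Longrightarrow> phi A = psi A"
proof (induction "card A" arbitrary: A rule: less_induct)
  case less
  show ?case
  proof (cases "card A \<le> 2")
    case True thus ?thesis using small less.prems by blast
  next
    case False
    have finA: "finite A" using fin less.prems finite_subset by blast
    then obtain x where x: "x \<in> A" using False by fastforce
    have "card (A - {x}) > 0" using False finA x by auto
    then obtain y where y: "y \<in> A - {x}" by (metis card_gt_0_iff ex_in_conv)
    define B where "B = A - {x,y}"
    have A: "A = B \<union> {x} \<union> {y}" using x y B_def by auto
    have sub: "B \<subseteq> Omega" "{x} \<subseteq> Omega" "{y} \<subseteq> Omega" using less.prems x y B_def by auto
    have dis: "B \<inter> {x} = {}" "B \<inter> {y} = {}" "{x} \<inter> {y} = {}" using B_def y by auto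
    have lt: "\<And>C. C \<subseteq> A \<Longrightarrow> C \<noteq> A \<Longrightarrow> phi C = psi C"
    proof -
      fix C assume "C \<subseteq> A" "C \<noteq> A"
      hence "card C < card A" using finA by (meson psubsetI psubset_card_mono)
      thus "phi C = psi C" using less.hyps \<open>C \<subseteq> A\<close> less.prems by blast
    qed
    have e1: "phi (B \<union> {x}) = psi (B \<union> {x})" by (rule lt) (use x y B_def in auto)
    have e2: "phi (B \<union> {y}) = psi (B \<union> {y})" by (rule lt) (use x y B_def in auto)
    have e3: "phi ({x} \<union> {y}) = psi ({x} \<union> {y})" by (rule small) (use sub in \<open>auto simp: card_insert_if\<close>)
    have e4: "phi B = psi B" by (rule lt) (use x y B_def in auto)
    have e5: "phi {x} = psi {x}" by (rule small) (use sub in auto)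
    have e6: "phi {y} = psi {y}" by (rule small) (use sub in auto)
    have "phi (B \<union> {x} \<union> {y}) = psi (B \<union> {x} \<union> {y})"
    proof -
      have q1: "phi (B \<union> {x} \<union> {y}) = (phi (B \<union> {x}) \<noteq> (phi (B \<union> {y}) \<noteq> (phi ({x} \<union> {y}) \<noteq>
            (phi B \<noteq> (phi {x} \<noteq> phi {y})))))"
        using qp sub dis unfolding quadratic_coevent_def by blast
      have q2: "psi (B \<union> {x} \<union> {y}) = (psi (B \<union> {x}) \<noteq> (psi (B \<union> {y}) \<noteq> (psi ({x} \<union> {y}) \<noteq>
            (psi B \<noteq> (psi {x} \<noteq> psi {y})))))"
        using qq sub dis unfolding quadratic_coevent_def by blast
      show ?thesis unfolding q1 q2 e1 e2 e3 e4 e5 e6 ..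
    qed
    thus ?thesis using A by simp
  qed
qed

theorem theorem5p3:
  fixes Omega :: "'a set" and mu :: "'a set \<Rightarrow> real" and phi psi :: "'a set \<Rightarrow> bool"
  assumes "finite Omega" and "Omega \<noteq> {}"
    and "q_measure Omega mu"
    and "quadratic_coevent Omega phi" and "quadratic_coevent Omega psi"
    and "two_generates Omega mu phi" and "two_generates Omega mu psi"
  shows "\<forall>A. A \<subseteq> Omega \<longrightarrow> phi A = psi A"
proof -
  obtain f where f: "\<forall>w\<in>Omega. \<forall>w'\<in>Omega. f w w' > 0 \<and> f w w' = f w' w"
    and mf: "\<forall>A. A \<subseteq> Omega \<longrightarrow> mu A = q_integral_on Omega phi A
                    (\<lambda>w'. q_integral_on Omega phi A (\<lambda>w. f w w'))"
    using assms(6) unfolding two_generates_def by blast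
  obtain f' where f': "\<forall>w\<in>Omega. \<forall>w'\<in>Omega. f' w w' > 0 \<and> f' w w' = f' w' w"
    and mf': "\<forall>A. A \<subseteq> Omega \<longrightarrow> mu A = q_integral_on Omega psi A
                    (\<lambda>w'. q_integral_on Omega psi A (\<lambda>w. f' w w'))"
    using assms(7) unfolding two_generates_def by blast
  have np: "\<not> phi {}" "\<not> psi {}" using assms(4,5) unfolding quadratic_coevent_def coevent_def by auto
  have sing: "\<And>a. a \<in> Omega \<Longrightarrow> phi {a} = psi {a}"
  proof -
    fix a assume a: "a \<in> Omega"
    have "phi {a} \<longleftrightarrow> mu {a} > 0" using gen_single[OF np(1) f mf a] f a by auto
    moreover have "psi {a} \<longleftrightarrow> mu {a} > 0" using gen_single[OF np(2) f' mf' a] f' a by auto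
    ultimately show "phi {a} = psi {a}" by simp
  qed
  have small: "\<And>A. A \<subseteq> Omega \<Longrightarrow> card A \<le> 2 \<Longrightarrow> phi A = psi A"
  proof -
    fix A assume A: "A \<subseteq> Omega" "card A \<le> 2"
    have finA: "finite A" using A assms(1) finite_subset by blast
    have "card A = 0 \<or> card A = 1 \<or> card A = 2" using A by auto
    moreover
    { assume "card A = 0" hence "A = {}" using finA by simp
      hence "phi A = psi A" using np by simp }
    moreover
    { assume "card A = 1" then obtain a where "A = {a}" by (auto simp: card_1_singleton_iff)
      hence "phi A = psi A" using sing A by auto }
    moreover
    { assume "card A = 2" then obtain a b where ab: "A = {a,b}" "a \<noteq> b" by (auto simp: card_2_iff)
      hence a: "a \<in> Omega" and b: "b \<in> Omega" using A by auto
      have "phi A = psi A"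
        unfolding ab(1)
        using gen_pair[OF np(1) f mf a b ab(2)] gen_pair[OF np(2) f' mf' a b ab(2)] sing[OF a] sing[OF b]
        by simp }
    ultimately show "phi A = psi A" by blast
  qed
  show ?thesis using quad_reduce[OF assms(1,4,5) small] by blast
qed

end
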